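(* Let $0<s<1$, $2s<N\le4s$, $1+\frac{2s}{N}<p<\frac{N}{N-2s}$ and $a_1,a_2,\mu_1,\mu_2,\beta>0$. There exists $K>0$ sufficiently small such that $\sup_A E<\inf_B E$ and $E(u,v)>0$ for all $(u,v)\in A$, where $$A=\{(u,v)\in H^{rad}_{a_1}\times H^{rad}_{a_2}:\|(-\Delta)^{s/2}u\|^2_{L^2}+\|(-\Delta)^{s/2}v\|^2_{L^2}\le K\},$$ $$B=\{(u,v)\in H^{rad}_{a_1}\times H^{rad}_{a_2}:\|(-\Delta)^{s/2}u\|^2_{L^2}+\|(-\Delta)^{s/2}v\|^2_{L^2}=2K\}.$$
   Context: $(-\Delta)^s$ is the fractional Laplacian; $H_a:=\{u\in H^s(\mathbb{R}^N):\int u^2=a^2\}$, $H^{rad}_a$ its subset of radial functions. $E(u,v)=\frac12\int(|(-\Delta)^{s/2}u|^2+|(-\Delta)^{s/2}v|^2)dx-\frac1{2p}\int(\mu_1|u|^{2p}+2\beta|u|^p|v|^p+\mu_2|v|^{2p})dx$. *)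

theory Defs
  imports "HOL-Analysis.Analysis" "HOL-Analysis.Gamma_Function"
begin

text \<open>Normalising constant C(N,s) of the fractional Laplacian.\<close>
definition frac_const :: "real \<Rightarrow> real \<Rightarrow> real" where
  "frac_const N s = s * (2::real) powr (2* s) * Gamma ((N + 2* s)/2) / (pi powr (N/2) * Gamma (1 - s))"

definition gagliardo :: "real \<Rightarrow> (real^'n \<Rightarrow> real) \<Rightarrow> ennreal" where
  "gagliardo s u = (\<integral>\<^sup>+ x. \<integral>\<^sup>+ y. ennreal ((u x - u y)^2 / norm (x - y) powr (real CARD('n) + 2* s)) \<partial>lborel \<partial>lborel)"

text \<open>Fractional Sobolev space H^s(R^N), N = CARD('n).\<close>
definition Hs :: "real \<Rightarrow> (real^'n \<Rightarrow> real) set" where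
  "Hs s = {u. u \<in> borel_measurable lborel \<and> integrable lborel (\<lambda>x. (u x)^2) \<and> gagliardo s u < \<infinity>}"

text \<open>\<open>\<parallel>(-\<Delta>)^{s/2} u\<parallel>^2_{L^2} = C(N,s)/2 [u]^2\<close>.\<close>
definition frac_grad_sq :: "real \<Rightarrow> (real^'n \<Rightarrow> real) \<Rightarrow> real" where
  "frac_grad_sq s u = frac_const (real CARD('n)) s / 2 * enn2real (gagliardo s u)"

definition radial :: "(real^'n \<Rightarrow> real) \<Rightarrow> bool" where
  "radial u \<longleftrightarrow> (\<forall>x y. norm x = norm y \<longrightarrow> u x = u y)"

definition H_rad :: "real \<Rightarrow> real \<Rightarrow> (real^'n \<Rightarrow> real) set" where
  "H_rad s a = {u \<in> Hs s. (\<integral>x. (u x)^2 \<partial>lborel) = a^2 \<and> radial u}"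

definition energy :: "real \<Rightarrow> real \<Rightarrow> real \<Rightarrow> real \<Rightarrow> real \<Rightarrow>
    (real^'n \<Rightarrow> real) \<Rightarrow> (real^'n \<Rightarrow> real) \<Rightarrow> real" where
  "energy s p \<mu>1 \<mu>2 \<beta> u v =
     1/2 * (frac_grad_sq s u + frac_grad_sq s v)
     - 1/(2* p) * (\<integral>x. (\<mu>1 * \<bar>u x\<bar> powr (2* p) + 2*\<beta> * \<bar>u x\<bar> powr p * \<bar>v x\<bar> powr p
                         + \<mu>2 * \<bar>v x\<bar> powr (2* p)) \<partial>lborel)"

end

theory Submission
  imports Defs
begin


lemma emeasure_ball_vec:
  fixes x :: "real^'n"
  assumes "R \<ge> 0"
  shows "emeasure lborel (ball x R) = ennreal (R ^ CARD('n) * measure lborel (ball (0::real^'n) 1))"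
proof -
  have "emeasure lborel (ball x R) = ennreal (measure lborel (ball x R))"
    using emeasure_lborel_ball_finite[of x R] by (simp add: emeasure_eq_ennreal_measure)
  also have "measure lborel (ball x R) = R ^ CARD('n) * measure lborel (ball (0::real^'n) 1)"
    using content_ball_conv_unit_ball[OF assms, of x] by simp
  finally show ?thesis .
qed

lemma cheb:
  fixes u :: "real^'n \<Rightarrow> real"
  assumes um: "u \<in> borel_measurable lborel" and ui: "integrable lborel (\<lambda>x. (u x)^2)"
    and t: "t > 0"
  shows "emeasure lborel {x. \<bar>u x\<bar> > t} \<le> ennreal ((\<integral>x. (u x)^2 \<partial>lborel) / t^2)"
proof -
  have meas: "{x. \<bar>u x\<bar> > t} \<in> sets lborel" using um by measurable
  have "ennreal (t^2) * emeasure lborel {x. \<bar>u x\<bar> > t} = (\<integral>\<^sup>+x. ennreal (t^2) * indicator {x. \<bar>u x\<bar> > t} x \<partial>lborel)"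
    using meas by (simp add: nn_integral_cmult_indicator)
  also have "\<dots> \<le> (\<integral>\<^sup>+x. ennreal ((u x)^2) \<partial>lborel)"
  proof (rule nn_integral_mono)
    fix x
    show "ennreal (t^2) * indicator {x. \<bar>u x\<bar> > t} x \<le> ennreal ((u x)^2)"
    proof (cases "\<bar>u x\<bar> > t")
      case True
      then have "t^2 \<le> (u x)^2" using t
        by (metis abs_ge_zero abs_of_pos less_imp_le power2_abs power_mono)
      then show ?thesis using True by (simp)
    qed simp
  qed
  also have "\<dots> = ennreal (\<integral>x. (u x)^2 \<partial>lborel)"
    using ui by (intro nn_integral_eq_integral) auto
  finally have "ennreal (t^2) * emeasure lborel {x. \<bar>u x\<bar> > t} \<le> ennreal (\<integral>x. (u x)^2 \<partial>lborel)" .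
  then have "ennreal (1/t^2) * (ennreal (t^2) * emeasure lborel {x. \<bar>u x\<bar> > t}) \<le> ennreal (1/t^2) * ennreal (\<integral>x. (u x)^2 \<partial>lborel)"
    by (rule mult_left_mono) simp
  moreover have "ennreal (1/t^2) * ennreal (t^2) = 1" using t
    by (simp add: ennreal_mult''[symmetric])
  ultimately show ?thesis using t
    by (simp add: mult.assoc[symmetric] ennreal_mult''[symmetric] del: ennreal_mult' )
qed



lemma kernel_pt:
  fixes u :: "real^'n \<Rightarrow> real" and x y :: "real^'n"
  assumes t: "t > 0" and e: "e \<ge> 0" and x: "\<bar>u x\<bar> > t" and y: "\<bar>u y\<bar> \<le> t/4" and d: "dist x y < R"
  shows "(t/2)^2 / R powr e \<le> (u x - u y)^2 / norm (x - y) powr e"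
proof -
  have "x \<noteq> y" using x y t by auto
  then have dpos: "norm (x - y) > 0" by simp
  have dR: "norm (x - y) \<le> R" using d by (simp add: dist_norm)
  have "\<bar>u x - u y\<bar> \<ge> t/2" using x y t by linarith
  then have num: "(t/2)^2 \<le> (u x - u y)^2"
    by (metis abs_ge_zero power2_abs power_mono t half_gt_zero less_imp_le abs_of_pos)
  have "norm (x - y) powr e \<le> R powr e" using dpos dR e by (intro powr_mono2) auto
  moreover have "norm (x - y) powr e > 0" using dpos by simp
  moreover have "R > 0" using dpos dR by linarith
  then have "R powr e > 0" by simp
  ultimately have "(t/2)^2 / R powr e \<le> (t/2)^2 / norm (x - y) powr e"
    by (intro divide_left_mono) auto
  also have "\<dots> \<le> (u x - u y)^2 / norm (x - y) powr e"
    using num \<open>norm (x - y) powr e > 0\<close> by (intro divide_right_mono) auto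
  finally show ?thesis .
qed

lemma key_lower:
  fixes u :: "real^'n \<Rightarrow> real"
  assumes um[measurable]: "u \<in> borel_measurable lborel" and t: "t > 0" and R: "R > 0" and s: "s > 0"
    and fin: "emeasure lborel {x. \<bar>u x\<bar> > t/4} < \<infinity>"
  shows "ennreal ((t/2)^2 / R powr (real CARD('n) + 2* s) *
            (R ^ CARD('n) * measure lborel (ball (0::real^'n) 1) - measure lborel {x. \<bar>u x\<bar> > t/4}))
          * emeasure lborel {x. \<bar>u x\<bar> > t} \<le> gagliardo s u"
proof -
  define e where "e = real CARD('n) + 2* s"
  define c where "c = (t/2)^2 / R powr e"
  define P where "P = {x. \<bar>u x\<bar> > t/4}"
  define F where "F = {x. \<bar>u x\<bar> \<le> t/4}"
  define E where "E = {x. \<bar>u x\<bar> > t}"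
  define m where "m = measure lborel P"
  define V where "V = R ^ CARD('n) * measure lborel (ball (0::real^'n) 1)"
  have e0: "e \<ge> 0" using s by (simp add: e_def)
  have c0: "c \<ge> 0" by (simp add: c_def)
  have msets[measurable]: "P \<in> sets lborel" "F \<in> sets lborel" "E \<in> sets lborel"
    unfolding P_def F_def E_def by measurable
  have Pf: "P \<in> fmeasurable lborel" using fin by (intro fmeasurableI) (auto simp: P_def)
  have inner: "ennreal (c * (V - m)) \<le> (\<integral>\<^sup>+y. ennreal ((u x - u y)^2 / norm (x - y) powr e) \<partial>lborel)"
    if xE: "x \<in> E" for x
  proof -
    have bs: "ball x R \<in> sets lborel" by simp
    have bf: "ball x R \<in> fmeasurable lborel"
      using emeasure_lborel_ball_finite[of x R] by (intro fmeasurableI) auto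
    have Fs: "F \<in> sets lborel" by measurable
    have bF: "ball x R \<inter> F \<in> fmeasurable lborel"
      by (rule fmeasurableI2[OF bf]) (use Fs bs in auto)
    have bmF: "ball x R - F \<in> fmeasurable lborel"
      by (rule fmeasurableI2[OF bf]) (use Fs bs in auto)
    have "measure lborel (ball x R) = V"
      using emeasure_ball_vec[of R x] R unfolding V_def
      by (simp add: measure_def)
    also have "measure lborel (ball x R) \<le> measure lborel (ball x R \<inter> F) + measure lborel (ball x R - F)"
    proof -
      have "ball x R = (ball x R \<inter> F) \<union> (ball x R - F)" by auto
      moreover have "measure lborel ((ball x R \<inter> F) \<union> (ball x R - F)) \<le> measure lborel (ball x R \<inter> F) + measure lborel (ball x R - F)"
        by (rule measure_Un_le) (use Fs bs in auto)
      ultimately show ?thesis by metis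
    qed
    moreover have "measure lborel (ball x R - F) \<le> m"
      unfolding m_def by (rule measure_mono_fmeasurable) (use Fs bs Pf in \<open>auto simp: P_def F_def\<close>)
    ultimately have "V - m \<le> measure lborel (ball x R \<inter> F)" by linarith
    then have "ennreal (V - m) \<le> emeasure lborel (ball x R \<inter> F)"
    proof -
      have "emeasure lborel (ball x R \<inter> F) = ennreal (measure lborel (ball x R \<inter> F))"
        using bF unfolding fmeasurable_def by (auto intro!: emeasure_eq_ennreal_measure)
      then show ?thesis using \<open>V - m \<le> measure lborel (ball x R \<inter> F)\<close> by (simp add: ennreal_leI)
    qed
    then have "ennreal c * ennreal (V - m) \<le> ennreal c * emeasure lborel (ball x R \<inter> F)"
      by (rule mult_left_mono) simp
    also have "\<dots> = (\<integral>\<^sup>+y. ennreal c * indicator (ball x R \<inter> F) y \<partial>lborel)"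
      by (rule nn_integral_cmult_indicator[symmetric]) (use Fs bs in auto)
    also have "\<dots> \<le> (\<integral>\<^sup>+y. ennreal ((u x - u y)^2 / norm (x - y) powr e) \<partial>lborel)"
    proof (rule nn_integral_mono)
      fix y
      show "ennreal c * indicator (ball x R \<inter> F) y \<le> ennreal ((u x - u y)^2 / norm (x - y) powr e)"
      proof (cases "y \<in> ball x R \<inter> F")
        case True
        then have "c \<le> (u x - u y)^2 / norm (x - y) powr e"
          unfolding c_def using kernel_pt[OF t e0, of u x y R] xE by (auto simp: E_def F_def)
        then show ?thesis using True by (simp add: ennreal_leI)
      qed simp
    qed
    finally show ?thesis using c0 by (simp add: ennreal_mult')
  qed
  have "ennreal (c * (V - m)) * emeasure lborel E = (\<integral>\<^sup>+x. ennreal (c * (V - m)) * indicator E x \<partial>lborel)"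
    by (rule nn_integral_cmult_indicator[symmetric]) (use msets in simp)
  also have "\<dots> \<le> (\<integral>\<^sup>+x. (\<integral>\<^sup>+y. ennreal ((u x - u y)^2 / norm (x - y) powr e) \<partial>lborel) \<partial>lborel)"
  proof (rule nn_integral_mono)
    fix x show "ennreal (c * (V - m)) * indicator E x \<le> (\<integral>\<^sup>+y. ennreal ((u x - u y)^2 / norm (x - y) powr e) \<partial>lborel)"
      using inner[of x] by (cases "x \<in> E") auto
  qed
  also have "\<dots> = gagliardo s u" by (simp add: gagliardo_def e_def)
  finally show ?thesis by (simp add: c_def e_def V_def m_def P_def E_def)
qed



lemma omega_pos: "measure lborel (ball (0::real^'n) 1) > 0"
  by simp

lemma fm_emeasure: "A \<in> fmeasurable M \<Longrightarrow> emeasure M A = ennreal (measure M A)"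
  unfolding fmeasurable_def by (auto intro!: emeasure_eq_ennreal_measure)

lemma recur:
  fixes u :: "real^'n \<Rightarrow> real"
  assumes um[measurable]: "u \<in> borel_measurable lborel" and t: "t > 0" and s: "s > 0"
    and fin: "emeasure lborel {x. \<bar>u x\<bar> > t/4} < \<infinity>"
    and gag: "gagliardo s u \<le> ennreal G" and G0: "G \<ge> 0"
  shows "measure lborel {x. \<bar>u x\<bar> > t} \<le>
    8 * (2 / measure lborel (ball (0::real^'n) 1)) powr (2* s/real CARD('n)) / measure lborel (ball (0::real^'n) 1)
      * G / t^2 * (measure lborel {x. \<bar>u x\<bar> > t/4}) powr (2* s/real CARD('n))"
proof -
  define \<omega> where "\<omega> = measure lborel (ball (0::real^'n) 1)"
  define N where "N = real CARD('n)"
  define \<theta> where "\<theta> = 2* s/N"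
  define m where "m = measure lborel {x. \<bar>u x\<bar> > t/4}"
  define E where "E = {x. \<bar>u x\<bar> > t}"
  have \<omega>: "\<omega> > 0" unfolding \<omega>_def by simp
  have N: "N > 0" "N \<ge> 1" unfolding N_def by auto
  have Pf: "{x. \<bar>u x\<bar> > t/4} \<in> fmeasurable lborel" using fin by (intro fmeasurableI) auto
  have EP: "E \<subseteq> {x. \<bar>u x\<bar> > t/4}" using t by (auto simp: E_def)
  have Es: "E \<in> sets lborel" unfolding E_def by measurable
  have Ef: "E \<in> fmeasurable lborel" by (rule fmeasurableI2[OF Pf EP Es])
  have mE: "measure lborel E \<le> m" unfolding m_def by (rule measure_mono_fmeasurable[OF EP Es Pf])
  have m0: "m \<ge> 0" by (simp add: m_def)
  show ?thesis
  proof (cases "m = 0")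
    case True
    then have "measure lborel E = 0" using mE by (simp add: measure_nonneg antisym)
    then show ?thesis using True by (simp add: E_def m_def)
  next
    case False
    then have mpos: "m > 0" using m0 by simp
    define R where "R = (2*m/\<omega>) powr (1/N)"
    have R: "R > 0" unfolding R_def using mpos \<omega> by simp
    have RN: "R ^ CARD('n) = 2*m/\<omega>"
    proof -
      have "R ^ CARD('n) = R powr N" using R by (simp add: N_def powr_realpow)
      also have "\<dots> = 2*m/\<omega>" unfolding R_def using N mpos \<omega> by (simp add: powr_powr)
      finally show ?thesis .
    qed
    have R2s: "R powr (2* s) = (2/\<omega>) powr \<theta> * m powr \<theta>"
    proof -
      have "R powr (2* s) = (2*m/\<omega>) powr \<theta>" unfolding R_def \<theta>_def using N by (simp add: powr_powr)
      also have "\<dots> = (2/\<omega>) powr \<theta> * m powr \<theta>" using mpos \<omega>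
        by (simp add: powr_mult[symmetric])
      finally show ?thesis .
    qed
    have RE: "R powr (N + 2* s) = 2*m/\<omega> * ((2/\<omega>) powr \<theta> * m powr \<theta>)"
      using R by (simp add: powr_add R2s RN[symmetric] N_def powr_realpow)
    define c where "c = (t/2)^2 / R powr (N + 2* s)"
    have cm: "c * (R ^ CARD('n) * \<omega> - m) = t^2 * \<omega> / (8 * (2/\<omega>) powr \<theta> * m powr \<theta>)"
      unfolding c_def RE RN using mpos \<omega> by (simp add: field_simps power2_eq_square)
    have cpos: "c * (R ^ CARD('n) * \<omega> - m) > 0" unfolding cm using t \<omega> mpos by simp
    have "ennreal (c * (R ^ CARD('n) * \<omega> - m)) * emeasure lborel E \<le> gagliardo s u"
      using key_lower[OF um t R s fin] unfolding c_def N_def \<omega>_def m_def E_def by simp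
    also have "\<dots> \<le> ennreal G" by (rule gag)
    finally have "ennreal (c * (R ^ CARD('n) * \<omega> - m)) * ennreal (measure lborel E) \<le> ennreal G"
      using fm_emeasure[OF Ef] by simp
    then have "c * (R ^ CARD('n) * \<omega> - m) * measure lborel E \<le> G"
      using cpos G0 by (simp add: ennreal_mult''[symmetric] measure_nonneg)
    then have "t^2 * \<omega> * measure lborel E \<le> G * (8 * (2/\<omega>) powr \<theta> * m powr \<theta>)"
      unfolding cm using mpos \<omega> by (simp add: field_simps)
    then have "measure lborel E \<le> G * (8 * (2/\<omega>) powr \<theta> * m powr \<theta>) / (t^2 * \<omega>)"
      using t \<omega> by (simp add: field_simps)
    also have "\<dots> = 8 * (2/\<omega>) powr \<theta> / \<omega> * G / t^2 * m powr \<theta>" by (simp add: field_simps)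
    finally show ?thesis by (simp add: E_def \<omega>_def \<theta>_def N_def m_def)
  qed
qed



definition qq :: "real \<Rightarrow> nat \<Rightarrow> real" where "qq \<theta> n = 2*(1-\<theta>^Suc n)/(1-\<theta>)"
definition SS :: "real \<Rightarrow> nat \<Rightarrow> real" where "SS \<theta> n = (1-\<theta>^n)/(1-\<theta>)"
primrec DD :: "real \<Rightarrow> real \<Rightarrow> real \<Rightarrow> nat \<Rightarrow> real" where
  "DD A C \<theta> 0 = A"
| "DD A C \<theta> (Suc n) = C * 4 powr (\<theta> * qq \<theta> n) * (DD A C \<theta> n) powr \<theta>"

lemma DD_pos: "A > 0 \<Longrightarrow> C > 0 \<Longrightarrow> DD A C \<theta> n > 0"
  by (induction n) auto

lemma qq_Suc: "\<theta> \<noteq> 1 \<Longrightarrow> qq \<theta> (Suc n) = 2 + \<theta> * qq \<theta> n"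
  unfolding qq_def by (simp add: field_simps)
lemma SS_Suc: "\<theta> \<noteq> 1 \<Longrightarrow> SS \<theta> (Suc n) = 1 + \<theta> * SS \<theta> n"
  unfolding SS_def by (simp add: field_simps)
lemma qq0: "\<theta> \<noteq> 1 \<Longrightarrow> qq \<theta> 0 = 2" unfolding qq_def by (simp add: field_simps)
lemma SS0: "SS \<theta> 0 = 0" unfolding SS_def by simp
lemma qq_SS: "\<theta> \<noteq> 1 \<Longrightarrow> qq \<theta> n - 2 = 2 * \<theta> * SS \<theta> n"
  unfolding qq_def SS_def by (simp add: field_simps)

lemma step_alg:
  fixes C D G t \<theta> S q :: real
  assumes "D > 0" "G > 0" "t > 0" "C > 0"
  shows "C*G/t^2 * (D * G powr S / (t/4) powr q) powr \<theta>
       = C * 4 powr (\<theta>*q) * D powr \<theta> * G powr (1 + \<theta>*S) / t powr (2 + \<theta>*q)"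
proof -
  have "(D * G powr S / (t/4) powr q) powr \<theta> = D powr \<theta> * G powr (S*\<theta>) / ((t/4) powr (q*\<theta>))"
    using assms by (simp add: powr_mult powr_divide powr_powr)
  also have "(t/4) powr (q*\<theta>) = t powr (q*\<theta>) / 4 powr (q*\<theta>)"
    using assms by (simp add: powr_divide)
  finally have 1: "(D * G powr S / (t/4) powr q) powr \<theta> = D powr \<theta> * G powr (S*\<theta>) * 4 powr (q*\<theta>) / t powr (q*\<theta>)"
    using assms by simp
  have 2: "G powr (1 + \<theta>*S) = G * G powr (S*\<theta>)" using assms by (simp add: powr_add mult.commute)
  have 3: "t powr (2 + \<theta>*q) = t^2 * t powr (q*\<theta>)" using assms by (simp add: powr_add mult.commute powr_realpow)
  show ?thesis unfolding 1 2 3 using assms by (simp add: field_simps mult.commute)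
qed



lemma cheb_measure:
  fixes u :: "real^'n \<Rightarrow> real"
  assumes um: "u \<in> borel_measurable lborel" and ui: "integrable lborel (\<lambda>x. (u x)^2)" and t: "t > 0"
  shows "{x. \<bar>u x\<bar> > t} \<in> fmeasurable lborel"
    "measure lborel {x. \<bar>u x\<bar> > t} \<le> (\<integral>x. (u x)^2 \<partial>lborel) / t^2"
proof -
  have c: "emeasure lborel {x. \<bar>u x\<bar> > t} \<le> ennreal ((\<integral>x. (u x)^2 \<partial>lborel) / t^2)"
    by (rule cheb[OF um ui t])
  have s: "{x. \<bar>u x\<bar> > t} \<in> sets lborel" using um by measurable
  show f: "{x. \<bar>u x\<bar> > t} \<in> fmeasurable lborel"
    using c s by (intro fmeasurableI) (auto simp: order.strict_trans1)
  have "ennreal (measure lborel {x. \<bar>u x\<bar> > t}) \<le> ennreal ((\<integral>x. (u x)^2 \<partial>lborel) / t^2)"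
    using c fm_emeasure[OF f] by simp
  moreover have "(\<integral>x. (u x)^2 \<partial>lborel) / t^2 \<ge> 0" by simp
  ultimately show "measure lborel {x. \<bar>u x\<bar> > t} \<le> (\<integral>x. (u x)^2 \<partial>lborel) / t^2"
    by (simp add: ennreal_le_iff)
qed

lemma iter:
  fixes u :: "real^'n \<Rightarrow> real"
  assumes um[measurable]: "u \<in> borel_measurable lborel" and ui: "integrable lborel (\<lambda>x. (u x)^2)"
    and A: "(\<integral>x. (u x)^2 \<partial>lborel) = A" "A > 0" and s: "s > 0"
    and th: "\<theta> = 2* s/real CARD('n)" "\<theta> < 1"
    and gag: "gagliardo s u \<le> ennreal G" and G: "G > 0"
    and C1: "C1 = 8 * (2 / measure lborel (ball (0::real^'n) 1)) powr \<theta> / measure lborel (ball (0::real^'n) 1)"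
  shows "\<forall>t>0. measure lborel {x. \<bar>u x\<bar> > t} \<le> DD A C1 \<theta> n * G powr SS \<theta> n / t powr qq \<theta> n"
proof (induction n)
  case 0
  have "\<theta> \<noteq> 1" using th by simp
  then show ?case using cheb_measure(2)[OF um ui] A G
    by (simp add: qq0 SS0 powr_realpow)
next
  case (Suc n)
  have tne: "\<theta> \<noteq> 1" using th by simp
  have th0: "\<theta> \<ge> 0" using th s by simp
  have C1p: "C1 > 0" unfolding C1 by simp
  define D where "D = DD A C1 \<theta> n"
  have Dp: "D > 0" unfolding D_def using DD_pos[OF A(2) C1p] .
  show ?case
  proof (intro allI impI)
    fix t :: real assume t: "t > 0"
    have fin: "emeasure lborel {x. \<bar>u x\<bar> > t/4} < \<infinity>"
      using cheb_measure(1)[OF um ui, of "t/4"] t by (simp add: fmeasurable_def)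
    have "measure lborel {x. \<bar>u x\<bar> > t} \<le> C1 * G / t^2 * (measure lborel {x. \<bar>u x\<bar> > t/4}) powr \<theta>"
      using recur[OF um t s fin gag] G unfolding C1 th(1) by simp
    also have "\<dots> \<le> C1 * G / t^2 * (D * G powr SS \<theta> n / (t/4) powr qq \<theta> n) powr \<theta>"
    proof (rule mult_left_mono)
      show "measure lborel {x. \<bar>u x\<bar> > t/4} powr \<theta> \<le> (D * G powr SS \<theta> n / (t/4) powr qq \<theta> n) powr \<theta>"
        using Suc[rule_format, of "t/4"] t th0 unfolding D_def by (intro powr_mono2) auto
      show "0 \<le> C1 * G / t^2" using C1p G by simp
    qed
    also have "\<dots> = C1 * 4 powr (\<theta> * qq \<theta> n) * D powr \<theta> * G powr (1 + \<theta> * SS \<theta> n) / t powr (2 + \<theta> * qq \<theta> n)"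
      by (rule step_alg[OF Dp G t C1p])
    also have "\<dots> = DD A C1 \<theta> (Suc n) * G powr SS \<theta> (Suc n) / t powr qq \<theta> (Suc n)"
      using tne by (simp add: qq_Suc SS_Suc D_def)
    finally show "measure lborel {x. \<bar>u x\<bar> > t} \<le> DD A C1 \<theta> (Suc n) * G powr SS \<theta> (Suc n) / t powr qq \<theta> (Suc n)" .
  qed
qed



lemma single_le_suminf_ennreal: "(f :: nat \<Rightarrow> ennreal) k \<le> suminf f"
  using sum_le_suminf[of f "{k}"] by (simp add: summableI)

lemma dyadic_pt:
  fixes y t0 p :: real
  assumes t0: "t0 > 0" and p: "p > 1"
  shows "ennreal (\<bar>y\<bar> powr (2*p)) \<le> ennreal (t0 powr (2*p-2) * y^2)
     + (\<Sum>k. ennreal ((t0 * 2 powr (real k + 1)) powr (2*p)) * indicator {z::real. z > t0 * 2 powr real k} \<bar>y\<bar>)"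
proof (cases "\<bar>y\<bar> \<le> t0")
  case True
  have "\<bar>y\<bar> powr (2*p) \<le> t0 powr (2*p-2) * y^2"
  proof (cases "y = 0")
    case False
    have "\<bar>y\<bar> powr (2*p) = \<bar>y\<bar> powr ((2*p-2) + 2)" by simp
    also have "\<dots> = \<bar>y\<bar> powr (2*p-2) * \<bar>y\<bar> powr 2" by (rule powr_add)
    also have "\<dots> = \<bar>y\<bar> powr (2*p-2) * y^2" using False by (simp add: powr_realpow)
    also have "\<dots> \<le> t0 powr (2*p-2) * y^2"
      using True p by (intro mult_right_mono powr_mono2) auto
    finally show ?thesis .
  qed (use p in simp)
  then show ?thesis by (intro add_increasing2) (auto simp: ennreal_leI)
next
  case False
  define r where "r = \<bar>y\<bar> / t0"
  have r1: "r > 1" using False t0 by (simp add: r_def)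
  define L where "L = log 2 r"
  have L0: "L > 0" using r1 by (simp add: L_def)
  define k where "k = nat (ceiling L - 1)"
  have ck: "ceiling L \<ge> 1" using L0 by (simp add: le_ceiling_iff) 
  have kr: "real k = of_int (ceiling L) - 1" using ck by (simp add: k_def)
  have "real k < L" using kr ceiling_correct[of L] by linarith
  then have "2 powr real k < 2 powr L" by simp
  also have "2 powr L = r" using r1 by (simp add: L_def)
  finally have lo: "t0 * 2 powr real k < \<bar>y\<bar>" using t0 by (simp add: r_def field_simps)
  have "L \<le> real k + 1" using kr ceiling_correct[of L] by linarith
  then have "2 powr L \<le> 2 powr (real k + 1)" by simp
  then have "r \<le> 2 powr (real k + 1)" using \<open>2 powr L = r\<close> by simp
  then have hi: "\<bar>y\<bar> \<le> t0 * 2 powr (real k + 1)" using t0 by (simp add: r_def field_simps)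
  have "\<bar>y\<bar> powr (2*p) \<le> (t0 * 2 powr (real k + 1)) powr (2*p)"
    using hi p by (intro powr_mono2) auto
  then have "ennreal (\<bar>y\<bar> powr (2*p)) \<le> ennreal ((t0 * 2 powr (real k + 1)) powr (2*p)) * indicator {z::real. z > t0 * 2 powr real k} \<bar>y\<bar>"
    using lo by (simp add: ennreal_leI)
  also have "\<dots> \<le> (\<Sum>k. ennreal ((t0 * 2 powr (real k + 1)) powr (2*p)) * indicator {z::real. z > t0 * 2 powr real k} \<bar>y\<bar>)"
    by (rule single_le_suminf_ennreal)
  finally show ?thesis by (intro add_increasing) auto
qed



lemma dy_alg:
  fixes t0 p q K :: real and k :: nat
  assumes t0: "t0 > 0"
  shows "(t0 * 2 powr (real k + 1)) powr (2*p) * (K / (t0 * 2 powr real k) powr q)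
       = 2 powr (2*p) * K * t0 powr (2*p - q) * (2 powr (2*p - q)) ^ k"
proof -
  have 1: "(t0 * 2 powr (real k + 1)) powr (2*p) = t0 powr (2*p) * 2 powr (2*p) * 2 powr (2*p*real k)"
    using t0 by (simp add: powr_mult powr_powr powr_add[symmetric] algebra_simps)
  have 2: "(t0 * 2 powr real k) powr q = t0 powr q * 2 powr (q * real k)"
    using t0 by (simp add: powr_mult powr_powr algebra_simps)
  have 3: "(2 powr (2*p - q)) ^ k = 2 powr (2*p*real k) / 2 powr (q * real k)"
    by (simp add: powr_realpow[symmetric] powr_powr powr_diff[symmetric] algebra_simps)
  have 4: "t0 powr (2*p - q) = t0 powr (2*p) / t0 powr q" by (simp add: powr_diff)
  show ?thesis unfolding 1 2 3 4 using t0 by (simp add: field_simps)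
qed

lemma dyadic_int:
  fixes u :: "real^'n \<Rightarrow> real"
  assumes um[measurable]: "u \<in> borel_measurable lborel" and ui: "integrable lborel (\<lambda>x. (u x)^2)"
    and A: "(\<integral>x. (u x)^2 \<partial>lborel) = A" and t0: "t0 > 0" and p: "p > 1" and q: "q > 2*p" and K: "K \<ge> 0"
    and bnd: "\<forall>t>0. measure lborel {x. \<bar>u x\<bar> > t} \<le> K / t powr q"
  shows "(\<integral>\<^sup>+x. ennreal (\<bar>u x\<bar> powr (2*p)) \<partial>lborel)
     \<le> ennreal (t0 powr (2*p-2) * A + 2 powr (2*p) * K * t0 powr (2*p - q) / (1 - 2 powr (2*p - q)))"
proof -
  define lev where "lev k = t0 * 2 powr real k" for k :: nat
  define b where "b k = (t0 * 2 powr (real k + 1)) powr (2*p)" for k :: nat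
  define r where "r = 2 powr (2*p - q)"
  define c2 where "c2 = 2 powr (2*p) * K * t0 powr (2*p - q)"
  have "2 powr (2*p - q) < 2 powr 0" by (rule powr_less_mono) (use q in auto)
  then have r: "0 < r" "r < 1" by (auto simp: r_def)
  have c2: "c2 \<ge> 0" using K by (simp add: c2_def)
  have levp: "lev k > 0" for k using t0 by (simp add: lev_def)
  have "(\<integral>\<^sup>+x. ennreal (\<bar>u x\<bar> powr (2*p)) \<partial>lborel)
      \<le> (\<integral>\<^sup>+x. ennreal (t0 powr (2*p-2) * (u x)^2) + (\<Sum>k. ennreal (b k) * indicator {x. \<bar>u x\<bar> > lev k} x) \<partial>lborel)"
  proof (rule nn_integral_mono)
    fix x
    have "indicator {z::real. z > lev k} \<bar>u x\<bar> = (indicator {x. \<bar>u x\<bar> > lev k} x :: ennreal)" for k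
      by (simp add: indicator_def)
    then show "ennreal (\<bar>u x\<bar> powr (2*p)) \<le> ennreal (t0 powr (2*p-2) * (u x)^2) + (\<Sum>k. ennreal (b k) * indicator {x. \<bar>u x\<bar> > lev k} x)"
      using dyadic_pt[OF t0 p, of "u x"] unfolding b_def lev_def by simp
  qed
  also have "\<dots> = (\<integral>\<^sup>+x. ennreal (t0 powr (2*p-2) * (u x)^2) \<partial>lborel) + (\<integral>\<^sup>+x. (\<Sum>k. ennreal (b k) * indicator {x. \<bar>u x\<bar> > lev k} x) \<partial>lborel)"
    by (rule nn_integral_add) auto
  also have "(\<integral>\<^sup>+x. ennreal (t0 powr (2*p-2) * (u x)^2) \<partial>lborel) = ennreal (t0 powr (2*p-2) * A)"
  proof -
    have "(\<integral>\<^sup>+x. ennreal (t0 powr (2*p-2) * (u x)^2) \<partial>lborel) = ennreal (\<integral>x. t0 powr (2*p-2) * (u x)^2 \<partial>lborel)"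
      using ui by (intro nn_integral_eq_integral) auto
    then show ?thesis using A by simp
  qed
  also have "(\<integral>\<^sup>+x. (\<Sum>k. ennreal (b k) * indicator {x. \<bar>u x\<bar> > lev k} x) \<partial>lborel)
      = (\<Sum>k. \<integral>\<^sup>+x. ennreal (b k) * indicator {x. \<bar>u x\<bar> > lev k} x \<partial>lborel)"
    by (rule nn_integral_suminf) auto
  also have "\<dots> \<le> (\<Sum>k. ennreal (c2 * r ^ k))"
  proof (rule suminf_le[OF _ summableI summableI])
    fix k
    have s: "{x. \<bar>u x\<bar> > lev k} \<in> sets lborel" by measurable
    have f: "{x. \<bar>u x\<bar> > lev k} \<in> fmeasurable lborel"
      using cheb_measure(1)[OF um ui levp] .
    have "(\<integral>\<^sup>+x. ennreal (b k) * indicator {x. \<bar>u x\<bar> > lev k} x \<partial>lborel) = ennreal (b k) * emeasure lborel {x. \<bar>u x\<bar> > lev k}"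
      by (rule nn_integral_cmult_indicator[OF s])
    also have "\<dots> = ennreal (b k * measure lborel {x. \<bar>u x\<bar> > lev k})"
      using fm_emeasure[OF f] by (simp add: ennreal_mult' b_def)
    also have "\<dots> \<le> ennreal (b k * (K / lev k powr q))"
      using bnd levp[of k] by (intro ennreal_leI mult_left_mono) (auto simp: b_def)
    also have "b k * (K / lev k powr q) = c2 * r ^ k"
      unfolding b_def lev_def c2_def r_def by (rule dy_alg[OF t0])
    finally show "(\<integral>\<^sup>+x. ennreal (b k) * indicator {x. \<bar>u x\<bar> > lev k} x \<partial>lborel) \<le> ennreal (c2 * r ^ k)" .
  qed
  also have "(\<Sum>k. ennreal (c2 * r ^ k)) = ennreal (c2 / (1 - r))"
  proof (rule suminf_ennreal_eq)
    show "0 \<le> c2 * r ^ k" for k using c2 r by simp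
    show "(\<lambda>k. c2 * r ^ k) sums (c2 / (1 - r))"
      using sums_mult[OF geometric_sums[of r], of c2] r by (simp add: divide_inverse)
  qed
  finally have fin: "(\<integral>\<^sup>+x. ennreal (\<bar>u x\<bar> powr (2*p)) \<partial>lborel) \<le> ennreal (t0 powr (2*p-2) * A) + ennreal (c2 / (1 - r))"
    by (simp add: add_left_mono)
  have A0: "A \<ge> 0" unfolding A[symmetric] by simp
  have "ennreal (t0 powr (2*p-2) * A) + ennreal (c2 / (1 - r)) = ennreal (t0 powr (2*p-2) * A + c2 / (1 - r))"
    using A0 c2 r by (intro ennreal_plus[symmetric]) auto
  then show ?thesis using fin by (simp add: c2_def r_def)
qed



lemma Lq_bound:
  fixes s p A \<theta> :: real
  assumes s: "s > 0" and th: "\<theta> = 2* s/real CARD('n)" "\<theta> < 1" and p: "p > 1" "p * (1 - \<theta>) < 1"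
    and A: "A > 0"
  shows "\<exists>Cst>0. \<forall>(u :: real^'n \<Rightarrow> real) G. u \<in> borel_measurable lborel \<longrightarrow> integrable lborel (\<lambda>x. (u x)^2)
     \<longrightarrow> (\<integral>x. (u x)^2 \<partial>lborel) = A \<longrightarrow> gagliardo s u \<le> ennreal G \<longrightarrow> G > 0 \<longrightarrow>
     (\<integral>\<^sup>+x. ennreal (\<bar>u x\<bar> powr (2*p)) \<partial>lborel) \<le> ennreal (Cst * G powr ((p-1)/\<theta>))"
proof -
  have thp: "\<theta> > 0" using th s by simp
  have tne: "\<theta> \<noteq> 1" using th by simp
  obtain n where n: "\<theta> ^ n < 1 - p * (1 - \<theta>)" using real_arch_pow_inv[of "1 - p * (1 - \<theta>)" \<theta>] p th by auto
  have "\<theta> ^ Suc n \<le> \<theta> ^ n" using thp th by (intro power_decreasing) auto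
  then have "\<theta> ^ Suc n < 1 - p * (1 - \<theta>)" using n by linarith
  then have "2*(p*(1-\<theta>)) < 2*(1-\<theta>^Suc n)" by (intro mult_strict_left_mono) auto
  then have "2*p*(1-\<theta>) < 2*(1-\<theta>^Suc n)" by (simp add: mult.assoc)
  then have qgt: "qq \<theta> n > 2*p" unfolding qq_def using th(2) by (simp add: pos_less_divide_eq)
  define C1 where "C1 = 8 * (2 / measure lborel (ball (0::real^'n) 1)) powr \<theta> / measure lborel (ball (0::real^'n) 1)"
  have C1p: "C1 > 0" unfolding C1_def by simp
  define D where "D = DD A C1 \<theta> n"
  have Dp: "D > 0" unfolding D_def by (rule DD_pos[OF A C1p])
  define q where "q = qq \<theta> n"
  define S where "S = SS \<theta> n"
  have qS: "q - 2 = 2 * \<theta> * S" unfolding q_def S_def by (rule qq_SS[OF tne])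
  define Cst where "Cst = A + 2 powr (2*p) * D / (1 - 2 powr (2*p - q))"
  have "2 powr (2*p - q) < 2 powr 0" by (rule powr_less_mono) (use qgt in \<open>auto simp: q_def\<close>)
  then have r1: "2 powr (2*p - q) < 1" by simp
  have Cp: "Cst > 0" unfolding Cst_def using A Dp r1 by (intro add_pos_nonneg) auto
  show ?thesis
  proof (intro exI[of _ Cst] conjI allI impI Cp)
    fix u :: "real^'n \<Rightarrow> real" and G :: real
    assume um: "u \<in> borel_measurable lborel" and ui: "integrable lborel (\<lambda>x. (u x)^2)"
      and uA: "(\<integral>x. (u x)^2 \<partial>lborel) = A" and gag: "gagliardo s u \<le> ennreal G" and G: "G > 0"
    have bnd: "\<forall>t>0. measure lborel {x. \<bar>u x\<bar> > t} \<le> D * G powr S / t powr q"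
      using iter[OF um ui uA A s th gag G C1_def, of n] unfolding D_def S_def q_def by simp
    define t0 where "t0 = G powr (1/(2*\<theta>))"
    have t0: "t0 > 0" unfolding t0_def using G by simp
    have K: "D * G powr S \<ge> 0" using Dp by simp
    have "(\<integral>\<^sup>+x. ennreal (\<bar>u x\<bar> powr (2*p)) \<partial>lborel)
      \<le> ennreal (t0 powr (2*p-2) * A + 2 powr (2*p) * (D * G powr S) * t0 powr (2*p - q) / (1 - 2 powr (2*p - q)))"
      using bnd by (intro dyadic_int[OF um ui uA t0 p(1) _ K]) (use qgt q_def in auto)
    also have "t0 powr (2*p-2) = G powr ((p-1)/\<theta>)"
    proof -
      have e: "1/(2*\<theta>) * (2*p-2) = (p-1)/\<theta>" using thp by (simp add: field_simps)
      show ?thesis unfolding t0_def using G by (simp only: powr_powr e)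
    qed
    also have "G powr S * t0 powr (2*p - q) = G powr ((p-1)/\<theta>)"
    proof -
      have "G powr S * t0 powr (2*p - q) = G powr (S + (2*p - q)/(2*\<theta>))"
        unfolding t0_def using G by (simp add: powr_powr powr_add)
      also have "S + (2*p - q)/(2*\<theta>) = (p-1)/\<theta>"
        using qS thp by (simp add: field_simps)
      finally show ?thesis .
    qed
    then have "2 powr (2*p) * (D * G powr S) * t0 powr (2*p - q) / (1 - 2 powr (2*p - q))
        = 2 powr (2*p) * D / (1 - 2 powr (2*p - q)) * G powr ((p-1)/\<theta>)"
      by (simp add: field_simps)
    finally show "(\<integral>\<^sup>+x. ennreal (\<bar>u x\<bar> powr (2*p)) \<partial>lborel) \<le> ennreal (Cst * G powr ((p-1)/\<theta>))"
      unfolding Cst_def by (simp add: field_simps)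
  qed
qed

lemma G_pos:
  fixes u :: "real^'n \<Rightarrow> real"
  assumes um[measurable]: "u \<in> borel_measurable lborel" and ui: "integrable lborel (\<lambda>x. (u x)^2)"
    and uA: "(\<integral>x. (u x)^2 \<partial>lborel) > 0" and s: "s > 0"
    and gf: "gagliardo s u < \<infinity>"
  shows "enn2real (gagliardo s u) > 0"
proof (rule ccontr)
  assume "\<not> enn2real (gagliardo s u) > 0"
  then have "enn2real (gagliardo s u) = 0" using enn2real_nonneg[of "gagliardo s u"] by linarith
  then have g0: "gagliardo s u = 0" using gf by (auto simp: enn2real_eq_0_iff)
  have null: "{x. \<bar>u x\<bar> > t} \<in> null_sets lborel" if t: "t > 0" for t
  proof -
    have fin: "emeasure lborel {x. \<bar>u x\<bar> > t/4} < \<infinity>"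
      using cheb_measure(1)[OF um ui, of "t/4"] t by (simp add: fmeasurable_def)
    have "measure lborel {x. \<bar>u x\<bar> > t} \<le> 0"
      using recur[OF um t s fin, of 0] g0 by simp
    then have m0: "measure lborel {x. \<bar>u x\<bar> > t} = 0" by (simp add: antisym)
    have f: "{x. \<bar>u x\<bar> > t} \<in> fmeasurable lborel" by (rule cheb_measure(1)[OF um ui t])
    have "emeasure lborel {x. \<bar>u x\<bar> > t} = 0" using fm_emeasure[OF f] m0 by simp
    then show ?thesis by (intro null_setsI) auto
  qed
  have "(\<Union>k. {x. \<bar>u x\<bar> > 1 / Suc k}) \<in> null_sets lborel"
    by (rule null_sets_UN) (rule null, simp)
  moreover have "{x. u x \<noteq> 0} = (\<Union>k. {x. \<bar>u x\<bar> > 1 / Suc k})"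
  proof (safe)
    fix x assume "u x \<noteq> 0"
    then obtain k where "1 / real (Suc k) < \<bar>u x\<bar>"
      using reals_Archimedean[of "\<bar>u x\<bar>"] by (auto simp: inverse_eq_divide)
    then show "x \<in> (\<Union>k. {x. \<bar>u x\<bar> > 1 / Suc k})" by auto
  qed auto
  ultimately have "AE x in lborel. u x = 0"
    by (intro AE_I'[of "{x. u x \<noteq> 0}"]) auto
  then have "AE x in lborel. (u x)^2 = 0" by eventually_elim auto
  then have "(\<integral>x. (u x)^2 \<partial>lborel) = 0"
    by (rule integral_eq_zero_AE)
  then show False using uA by simp
qed



lemma cross_le:
  fixes a b p :: real
  assumes "p > 0"
  shows "2 * (\<bar>a\<bar> powr p * \<bar>b\<bar> powr p) \<le> \<bar>a\<bar> powr (2*p) + \<bar>b\<bar> powr (2*p)"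
proof -
  have sq: "\<bar>x\<bar> powr (2*p) = (\<bar>x\<bar> powr p)^2" for x :: real
  proof (cases "x = 0")
    case False
    have "\<bar>x\<bar> powr (2*p) = (\<bar>x\<bar> powr p) powr 2" by (simp add: powr_powr mult.commute[of p 2])
    also have "\<dots> = (\<bar>x\<bar> powr p)^2" using powr_realpow[of "\<bar>x\<bar> powr p" 2] False by simp
    finally show ?thesis .
  qed (use assms in simp)
  have "2 * (\<bar>a\<bar> powr p * \<bar>b\<bar> powr p) \<le> (\<bar>a\<bar> powr p)^2 + (\<bar>b\<bar> powr p)^2"
    using sum_squares_bound[of "\<bar>a\<bar> powr p" "\<bar>b\<bar> powr p"] by (metis mult.assoc)
  then show ?thesis by (simp only: sq)
qed

lemma energy_bounds:
  fixes u v :: "real^'n \<Rightarrow> real"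
  assumes um[measurable]: "u \<in> borel_measurable lborel" and vm[measurable]: "v \<in> borel_measurable lborel"
    and fu: "(\<integral>\<^sup>+x. ennreal (\<bar>u x\<bar> powr (2*p)) \<partial>lborel) \<le> ennreal Iu"
    and fv: "(\<integral>\<^sup>+x. ennreal (\<bar>v x\<bar> powr (2*p)) \<partial>lborel) \<le> ennreal Iv"
    and I0: "Iu \<ge> 0" "Iv \<ge> 0" and p: "p > 0" and mu: "\<mu>1 > 0" "\<mu>2 > 0" "\<beta> > 0"
  shows "energy s p \<mu>1 \<mu>2 \<beta> u v \<le> 1/2 * (frac_grad_sq s u + frac_grad_sq s v)"
    "1/2 * (frac_grad_sq s u + frac_grad_sq s v) - 1/(2*p) * ((\<mu>1+\<beta>) * Iu + (\<mu>2+\<beta>) * Iv)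
       \<le> energy s p \<mu>1 \<mu>2 \<beta> u v"
proof -
  define F where "F x = \<mu>1 * \<bar>u x\<bar> powr (2*p) + 2*\<beta> * \<bar>u x\<bar> powr p * \<bar>v x\<bar> powr p + \<mu>2 * \<bar>v x\<bar> powr (2*p)" for x
  have Fm: "F \<in> borel_measurable lborel" unfolding F_def by measurable
  have F0: "F x \<ge> 0" for x
  proof -
    have "0 \<le> \<mu>1 * \<bar>u x\<bar> powr (2*p)" "0 \<le> 2*\<beta> * \<bar>u x\<bar> powr p * \<bar>v x\<bar> powr p" "0 \<le> \<mu>2 * \<bar>v x\<bar> powr (2*p)"
      using mu by auto
    then show ?thesis unfolding F_def by linarith
  qed
  have IF: "(\<integral>x. F x \<partial>lborel) = enn2real (\<integral>\<^sup>+x. ennreal (F x) \<partial>lborel)"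
    using Fm F0 by (intro integral_eq_nn_integral) auto
  have Fle: "F x \<le> (\<mu>1+\<beta>) * \<bar>u x\<bar> powr (2*p) + (\<mu>2+\<beta>) * \<bar>v x\<bar> powr (2*p)" for x
  proof -
    have "2*\<beta> * \<bar>u x\<bar> powr p * \<bar>v x\<bar> powr p = \<beta> * (2 * (\<bar>u x\<bar> powr p * \<bar>v x\<bar> powr p))" by simp
    also have "\<dots> \<le> \<beta> * (\<bar>u x\<bar> powr (2*p) + \<bar>v x\<bar> powr (2*p))"
      using cross_le[OF p] mu by (intro mult_left_mono) auto
    finally have h: "2*\<beta> * \<bar>u x\<bar> powr p * \<bar>v x\<bar> powr p \<le> \<beta> * (\<bar>u x\<bar> powr (2*p) + \<bar>v x\<bar> powr (2*p))" .
    have id: "\<And>a b c d e f :: real. (a+c)*e + (b+c)*f = a*e + c*(e+f) + b*f" by (simp add: algebra_simps)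
    show ?thesis unfolding F_def id using h by linarith
  qed
  have "(\<integral>\<^sup>+x. ennreal (F x) \<partial>lborel)
      \<le> (\<integral>\<^sup>+x. ennreal (\<mu>1+\<beta>) * ennreal (\<bar>u x\<bar> powr (2*p)) + ennreal (\<mu>2+\<beta>) * ennreal (\<bar>v x\<bar> powr (2*p)) \<partial>lborel)"
  proof (rule nn_integral_mono)
    fix x
    have "ennreal (F x) \<le> ennreal ((\<mu>1+\<beta>) * \<bar>u x\<bar> powr (2*p) + (\<mu>2+\<beta>) * \<bar>v x\<bar> powr (2*p))"
      using Fle by (rule ennreal_leI)
    also have "\<dots> = ennreal (\<mu>1+\<beta>) * ennreal (\<bar>u x\<bar> powr (2*p)) + ennreal (\<mu>2+\<beta>) * ennreal (\<bar>v x\<bar> powr (2*p))"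
      using mu by (simp add: ennreal_plus[symmetric] ennreal_mult[symmetric] del: ennreal_plus)
    finally show "ennreal (F x) \<le> \<dots>" .
  qed
  also have "\<dots> = ennreal (\<mu>1+\<beta>) * (\<integral>\<^sup>+x. ennreal (\<bar>u x\<bar> powr (2*p)) \<partial>lborel) + ennreal (\<mu>2+\<beta>) * (\<integral>\<^sup>+x. ennreal (\<bar>v x\<bar> powr (2*p)) \<partial>lborel)"
    by (simp add: nn_integral_add nn_integral_cmult)
  also have "\<dots> \<le> ennreal (\<mu>1+\<beta>) * ennreal Iu + ennreal (\<mu>2+\<beta>) * ennreal Iv"
    by (intro add_mono mult_left_mono fu fv) auto
  also have "\<dots> = ennreal ((\<mu>1+\<beta>) * Iu + (\<mu>2+\<beta>) * Iv)"
    using mu I0 by (simp add: ennreal_plus[symmetric] ennreal_mult[symmetric] del: ennreal_plus)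
  finally have "enn2real (\<integral>\<^sup>+x. ennreal (F x) \<partial>lborel) \<le> (\<mu>1+\<beta>) * Iu + (\<mu>2+\<beta>) * Iv"
    using mu I0 by (simp add: enn2real_leI)
  then have up: "(\<integral>x. F x \<partial>lborel) \<le> (\<mu>1+\<beta>) * Iu + (\<mu>2+\<beta>) * Iv" using IF by simp
  have lo: "(\<integral>x. F x \<partial>lborel) \<ge> 0" using F0 by simp
  have E: "energy s p \<mu>1 \<mu>2 \<beta> u v = 1/2 * (frac_grad_sq s u + frac_grad_sq s v) - 1/(2*p) * (\<integral>x. F x \<partial>lborel)"
    unfolding energy_def F_def ..
  show "energy s p \<mu>1 \<mu>2 \<beta> u v \<le> 1/2 * (frac_grad_sq s u + frac_grad_sq s v)"
  proof -
    have "0 \<le> 1/(2*p) * (\<integral>x. F x \<partial>lborel)" using lo p by simp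
    then show ?thesis unfolding E by linarith
  qed
  show "1/2 * (frac_grad_sq s u + frac_grad_sq s v) - 1/(2*p) * ((\<mu>1+\<beta>) * Iu + (\<mu>2+\<beta>) * Iv)
       \<le> energy s p \<mu>1 \<mu>2 \<beta> u v"
  proof -
    have "1/(2*p) * (\<integral>x. F x \<partial>lborel) \<le> 1/(2*p) * ((\<mu>1+\<beta>) * Iu + (\<mu>2+\<beta>) * Iv)"
      using mult_left_mono[OF up, of "1/(2*p)"] p by simp
    then show ?thesis unfolding E by (rule diff_left_mono)
  qed
qed



lemma Hrad_facts:
  fixes u :: "real^'n \<Rightarrow> real"
  assumes "u \<in> H_rad s a"
  shows "u \<in> borel_measurable lborel" "integrable lborel (\<lambda>x. (u x)^2)"
    "(\<integral>x. (u x)^2 \<partial>lborel) = a^2" "gagliardo s u = ennreal (enn2real (gagliardo s u))"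
    "gagliardo s u < \<infinity>"
  using assms by (auto simp: H_rad_def Hs_def less_top[symmetric] ennreal_enn2real_if)

theorem lemma4p2:
  fixes s p a1 a2 \<mu>1 \<mu>2 \<beta> :: real
  defines "N \<equiv> real CARD('n)"
  assumes "0 < s" "s < 1" "2* s < N" "N \<le> 4* s"
    and "1 + 2* s/N < p" "p < N/(N - 2* s)"
    and "a1 > 0" "a2 > 0" "\<mu>1 > 0" "\<mu>2 > 0" "\<beta> > 0"
  shows "\<exists>K>0.
    (let A = {(u, v). u \<in> (H_rad s a1 :: (real^'n \<Rightarrow> real) set) \<and> v \<in> H_rad s a2 \<and>
                      frac_grad_sq s u + frac_grad_sq s v \<le> K};
         B = {(u, v). u \<in> (H_rad s a1 :: (real^'n \<Rightarrow> real) set) \<and> v \<in> H_rad s a2 \<and>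
                      frac_grad_sq s u + frac_grad_sq s v = 2*K}
     in (SUP z\<in>A. ereal (energy s p \<mu>1 \<mu>2 \<beta> (fst z) (snd z)))
          < (INF z\<in>B. ereal (energy s p \<mu>1 \<mu>2 \<beta> (fst z) (snd z)))
        \<and> (\<forall>(u, v)\<in>A. energy s p \<mu>1 \<mu>2 \<beta> u v > 0))"
proof -
  note s = assms(2) and s1 = assms(3) and sN = assms(4) and pl = assms(6) and pu = assms(7)
    and a1 = assms(8) and a2 = assms(9) and mu = assms(10,11,12)
  have N: "N > 0" using sN s by simp
  define \<theta> where "\<theta> = 2* s/N"
  have th0: "\<theta> > 0" using s N by (simp add: \<theta>_def)
  have th1: "\<theta> < 1" using sN N by (simp add: \<theta>_def)
  have p1: "p > 1" using pl th0 unfolding \<theta>_def by linarith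
  have e: "N/(N - 2* s) = 1/(1-\<theta>)" using N sN by (simp add: \<theta>_def field_simps)
  have "p < 1/(1-\<theta>)" using pu e by simp
  then have p2: "p * (1 - \<theta>) < 1" using th1 by (simp add: pos_less_divide_eq)
  define \<gamma> where "\<gamma> = (p-1)/\<theta>"
  have "p - 1 > \<theta>" using pl unfolding \<theta>_def by linarith
  then have g1: "\<gamma> > 1" using th0 unfolding \<gamma>_def by (simp add: pos_less_divide_eq)
  have thN: "\<theta> = 2* s/real CARD('n)" by (simp add: \<theta>_def N_def)
  obtain Cu where Cu: "Cu > 0" and Cub: "\<forall>(u :: real^'n \<Rightarrow> real) G. u \<in> borel_measurable lborel \<longrightarrow> integrable lborel (\<lambda>x. (u x)^2)
     \<longrightarrow> (\<integral>x. (u x)^2 \<partial>lborel) = a1^2 \<longrightarrow> gagliardo s u \<le> ennreal G \<longrightarrow> G > 0 \<longrightarrow>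
     (\<integral>\<^sup>+x. ennreal (\<bar>u x\<bar> powr (2*p)) \<partial>lborel) \<le> ennreal (Cu * G powr \<gamma>)"
    using Lq_bound[OF s thN th1 p1 p2, of "a1^2"] a1 unfolding \<gamma>_def by auto
  obtain Cv where Cv: "Cv > 0" and Cvb: "\<forall>(u :: real^'n \<Rightarrow> real) G. u \<in> borel_measurable lborel \<longrightarrow> integrable lborel (\<lambda>x. (u x)^2)
     \<longrightarrow> (\<integral>x. (u x)^2 \<partial>lborel) = a2^2 \<longrightarrow> gagliardo s u \<le> ennreal G \<longrightarrow> G > 0 \<longrightarrow>
     (\<integral>\<^sup>+x. ennreal (\<bar>u x\<bar> powr (2*p)) \<partial>lborel) \<le> ennreal (Cv * G powr \<gamma>)"
    using Lq_bound[OF s thN th1 p1 p2, of "a2^2"] a2 unfolding \<gamma>_def by auto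
  define cF where "cF = frac_const N s / 2"
  have cF: "cF > 0"
  proof -
    have "Gamma ((N + 2* s)/2) > 0" using N s by (intro Gamma_real_pos) auto
    moreover have "Gamma (1 - s) > 0" using s1 by (intro Gamma_real_pos) auto
    ultimately show ?thesis using s by (simp add: cF_def frac_const_def)
  qed
  define M where "M = ((\<mu>1+\<beta>)*Cu + (\<mu>2+\<beta>)*Cv) * (1/cF) powr \<gamma> / (2*p)"
  have M: "M > 0" unfolding M_def using mu Cu Cv cF p1 by (intro divide_pos_pos mult_pos_pos add_pos_pos) auto
  have fgs: "frac_grad_sq s u = cF * enn2real (gagliardo s u)" for u :: "real^'n \<Rightarrow> real"
    by (simp add: frac_grad_sq_def cF_def N_def)
  have key: "0 < frac_grad_sq s u + frac_grad_sq s v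
      \<and> energy s p \<mu>1 \<mu>2 \<beta> u v \<le> (frac_grad_sq s u + frac_grad_sq s v) / 2
      \<and> (frac_grad_sq s u + frac_grad_sq s v) / 2 - M * (frac_grad_sq s u + frac_grad_sq s v) powr \<gamma> \<le> energy s p \<mu>1 \<mu>2 \<beta> u v"
    if u: "u \<in> H_rad s a1" and v: "v \<in> H_rad s a2" for u v :: "real^'n \<Rightarrow> real"
  proof -
    define Gu where "Gu = enn2real (gagliardo s u)"
    define Gv where "Gv = enn2real (gagliardo s v)"
    note uf = Hrad_facts[OF u] and vf = Hrad_facts[OF v]
    have Gu: "Gu > 0" unfolding Gu_def using G_pos[OF uf(1,2) _ s uf(5)] uf(3) a1 by simp
    have Gv: "Gv > 0" unfolding Gv_def using G_pos[OF vf(1,2) _ s vf(5)] vf(3) a2 by simp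
    define T where "T = frac_grad_sq s u + frac_grad_sq s v"
    have T: "T = cF * Gu + cF * Gv" unfolding T_def fgs Gu_def Gv_def ..
    have Tp: "T > 0" unfolding T using cF Gu Gv by (intro add_pos_pos mult_pos_pos)
    have Iu: "(\<integral>\<^sup>+x. ennreal (\<bar>u x\<bar> powr (2*p)) \<partial>lborel) \<le> ennreal (Cu * Gu powr \<gamma>)"
      using Cub uf Gu unfolding Gu_def by auto
    have Iv: "(\<integral>\<^sup>+x. ennreal (\<bar>v x\<bar> powr (2*p)) \<partial>lborel) \<le> ennreal (Cv * Gv powr \<gamma>)"
      using Cvb vf Gv unfolding Gv_def by auto
    note eb = energy_bounds[OF uf(1) vf(1) Iu Iv _ _ _ mu, of s]
    have Guc: "Gu powr \<gamma> \<le> T powr \<gamma> * (1/cF) powr \<gamma>"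
    proof -
      have "Gu \<le> T / cF" using cF Gv unfolding T by (simp add: field_simps)
      then have "Gu powr \<gamma> \<le> (T / cF) powr \<gamma>" using Gu g1 by (intro powr_mono2) auto
      also have "(T / cF) powr \<gamma> = T powr \<gamma> * (1/cF) powr \<gamma>" using Tp cF by (simp add: powr_divide powr_mult divide_inverse powr_minus)
      finally show ?thesis .
    qed
    have Gvc: "Gv powr \<gamma> \<le> T powr \<gamma> * (1/cF) powr \<gamma>"
    proof -
      have "Gv \<le> T / cF" using cF Gu unfolding T by (simp add: field_simps)
      then have "Gv powr \<gamma> \<le> (T / cF) powr \<gamma>" using Gv g1 by (intro powr_mono2) auto
      also have "(T / cF) powr \<gamma> = T powr \<gamma> * (1/cF) powr \<gamma>" using Tp cF by (simp add: powr_divide powr_mult divide_inverse powr_minus)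
      finally show ?thesis .
    qed
    have "(\<mu>1+\<beta>) * (Cu * Gu powr \<gamma>) + (\<mu>2+\<beta>) * (Cv * Gv powr \<gamma>)
        \<le> (\<mu>1+\<beta>) * (Cu * (T powr \<gamma> * (1/cF) powr \<gamma>)) + (\<mu>2+\<beta>) * (Cv * (T powr \<gamma> * (1/cF) powr \<gamma>))"
      using Guc Gvc Cu Cv mu by (intro add_mono mult_left_mono) auto
    also have "\<dots> = 2*p * M * T powr \<gamma>" unfolding M_def using p1 by (simp add: field_simps)
    finally have bnd: "(\<mu>1+\<beta>) * (Cu * Gu powr \<gamma>) + (\<mu>2+\<beta>) * (Cv * Gv powr \<gamma>) \<le> 2*p * M * T powr \<gamma>" .
    have "1/(2*p) * ((\<mu>1+\<beta>) * (Cu * Gu powr \<gamma>) + (\<mu>2+\<beta>) * (Cv * Gv powr \<gamma>)) \<le> 1/(2*p) * (2*p * M * T powr \<gamma>)"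
      using mult_left_mono[OF bnd, of "1/(2*p)"] p1 by simp
    also have "\<dots> = M * T powr \<gamma>" using p1 by simp
    finally have b2: "1/(2*p) * ((\<mu>1+\<beta>) * (Cu * Gu powr \<gamma>) + (\<mu>2+\<beta>) * (Cv * Gv powr \<gamma>)) \<le> M * T powr \<gamma>" .
    have lo: "1/2 * T - 1/(2*p) * ((\<mu>1+\<beta>) * (Cu * Gu powr \<gamma>) + (\<mu>2+\<beta>) * (Cv * Gv powr \<gamma>)) \<le> energy s p \<mu>1 \<mu>2 \<beta> u v"
      using eb(2) Cu Cv Gu Gv p1 unfolding T_def by simp
    have up: "energy s p \<mu>1 \<mu>2 \<beta> u v \<le> 1/2 * T"
      using eb(1) Cu Cv Gu Gv p1 unfolding T_def by simp
    show ?thesis using lo up b2 Tp unfolding T_def[symmetric] by linarith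
  qed
  define K where "K = (1 / (4 * M * 2 powr \<gamma>)) powr (1/(\<gamma>-1))"
  have K: "K > 0" unfolding K_def using M by simp
  have Kg: "K powr (\<gamma>-1) = 1 / (4 * M * 2 powr \<gamma>)"
    unfolding K_def using M g1 by (simp add: powr_powr)
  have Tsplit: "T powr \<gamma> = T * T powr (\<gamma>-1)" if "T > 0" for T :: real
    using that powr_add[of T 1 "\<gamma>-1"] by simp
  have posA: "energy s p \<mu>1 \<mu>2 \<beta> u v > 0"
    if u: "u \<in> H_rad s a1" and v: "v \<in> H_rad s a2" and TK: "frac_grad_sq s u + frac_grad_sq s v \<le> K"
    for u v :: "real^'n \<Rightarrow> real"
  proof -
    define T where "T = frac_grad_sq s u + frac_grad_sq s v"
    have k: "0 < T" "T/2 - M * T powr \<gamma> \<le> energy s p \<mu>1 \<mu>2 \<beta> u v"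
      using key[OF u v] unfolding T_def by auto
    have "T powr (\<gamma>-1) \<le> K powr (\<gamma>-1)" using k(1) TK g1 unfolding T_def by (intro powr_mono2) auto
    then have "M * T powr (\<gamma>-1) \<le> 1 / (4 * 2 powr \<gamma>)" using M unfolding Kg
      by (simp add: field_simps)
    also have "1 / (4 * 2 powr \<gamma>) < 1/2" using g1
    proof -
      have "2 powr \<gamma> \<ge> 2 powr 0" using g1 by (intro powr_mono) auto
      then have "2 powr \<gamma> \<ge> 1" by simp
      then show ?thesis by (simp add: field_simps)
    qed
    finally have "M * T powr (\<gamma>-1) < 1/2" .
    then have "T * (M * T powr (\<gamma>-1)) < T * (1/2)" using k(1) by (intro mult_strict_left_mono) auto
    then have "M * T powr \<gamma> < T/2" using Tsplit[OF k(1)] by (simp add: algebra_simps)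
    then show ?thesis using k(2) by linarith
  qed
  have upA: "energy s p \<mu>1 \<mu>2 \<beta> u v \<le> K/2"
    if u: "u \<in> H_rad s a1" and v: "v \<in> H_rad s a2" and TK: "frac_grad_sq s u + frac_grad_sq s v \<le> K"
    for u v :: "real^'n \<Rightarrow> real"
  proof -
    have "energy s p \<mu>1 \<mu>2 \<beta> u v \<le> (frac_grad_sq s u + frac_grad_sq s v) / 2" using key[OF u v] by blast
    moreover have "(frac_grad_sq s u + frac_grad_sq s v) / 2 \<le> K / 2" using TK by (rule divide_right_mono) simp
    ultimately show ?thesis by (rule order.trans)
  qed
  have loB: "3*K/4 \<le> energy s p \<mu>1 \<mu>2 \<beta> u v"
    if u: "u \<in> H_rad s a1" and v: "v \<in> H_rad s a2" and TK: "frac_grad_sq s u + frac_grad_sq s v = 2*K"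
    for u v :: "real^'n \<Rightarrow> real"
  proof -
    have k: "K - M * (2*K) powr \<gamma> \<le> energy s p \<mu>1 \<mu>2 \<beta> u v"
      using key[OF u v] TK by simp
    have "(2*K) powr \<gamma> = 2 powr \<gamma> * (K * K powr (\<gamma>-1))"
      using K Tsplit[OF K] by (simp add: powr_mult)
    then have "M * (2*K) powr \<gamma> = K/4" unfolding Kg using M by (simp add: field_simps)
    then show ?thesis using k by linarith
  qed
  show ?thesis
  proof (intro exI[of _ K] conjI K, unfold Let_def, intro conjI)
    let ?A = "{(u, v). u \<in> (H_rad s a1 :: (real^'n \<Rightarrow> real) set) \<and> v \<in> (H_rad s a2 :: (real^'n \<Rightarrow> real) set) \<and>
                      frac_grad_sq s u + frac_grad_sq s v \<le> K}"
    let ?B = "{(u, v). u \<in> (H_rad s a1 :: (real^'n \<Rightarrow> real) set) \<and> v \<in> (H_rad s a2 :: (real^'n \<Rightarrow> real) set) \<and>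
                      frac_grad_sq s u + frac_grad_sq s v = 2*K}"
    have "(SUP z\<in>?A. ereal (energy s p \<mu>1 \<mu>2 \<beta> (fst z) (snd z))) \<le> ereal (K/2)"
    proof (rule SUP_least)
      fix z assume "z \<in> ?A"
      then show "ereal (energy s p \<mu>1 \<mu>2 \<beta> (fst z) (snd z)) \<le> ereal (K/2)"
        using upA by (cases z) auto
    qed
    also have "ereal (K/2) < ereal (3*K/4)" using K by simp
    also have "ereal (3*K/4) \<le> (INF z\<in>?B. ereal (energy s p \<mu>1 \<mu>2 \<beta> (fst z) (snd z)))"
    proof (rule INF_greatest)
      fix z assume "z \<in> ?B"
      then show "ereal (3*K/4) \<le> ereal (energy s p \<mu>1 \<mu>2 \<beta> (fst z) (snd z))"
        using loB by (cases z) auto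
    qed
    finally show "(SUP z\<in>?A. ereal (energy s p \<mu>1 \<mu>2 \<beta> (fst z) (snd z)))
        < (INF z\<in>?B. ereal (energy s p \<mu>1 \<mu>2 \<beta> (fst z) (snd z)))" .
    show "\<forall>(u, v)\<in>?A. energy s p \<mu>1 \<mu>2 \<beta> u v > 0"
      using posA by auto
  qed
qed


end
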